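(* Let $\mathbb{F}$ be a field, $d\geq3$ and $V$ a vector space over $\mathbb{F}$ of dimension $d+1$. Let $E^*_0,\dots,E^*_d$ be a system of mutually orthogonal idempotents in $\mathrm{End}(V)$ and $A\in\mathrm{End}(V)$ with $E^*_iAE^*_j=0$ if $|i-j|>1$ and $E^*_iAE^*_j\neq0$ if $|i-j|=1$. Assume $A$ is multiplicity-free and bipartite with primitive idempotents $E_0,\dots,E_d$ and eigenvalues $\theta_0,\dots,\theta_d$. Let $\theta^*_0,\dots,\theta^*_d\in\mathbb{F}$ be mutually distinct and $A^*=\sum_i\theta^*_iE^*_i$. Assume $(E_0,E_1)$ is a tail and that the indexing is such that $E_2$ is the vertex of $\Delta$ other than $E_0$ adjacent to $E_1$. Fix a basis $v_0,\dots,v_d$ with $v_i\in E^*_iV$ and let $b_i,c_i,\alpha_i$ be as in the context. Let $a^*_i=\operatorname{tr}(E_iA^* )$, and let $b^*_0c^*_1$ be as in the context. Put $\psi=\theta^*_1+\theta^*_0-a^*_1-a^*_0$ and $\zeta=a^*_0a^*_1-b^*_0c^*_1-\theta^*_0\theta^*_1$. Then for $0\le i\le d$, $$c_i(\theta^*_{i-1}-\theta^*_0)(\theta^*_{i-1}-\theta^*_1)\alpha_{i-1}+b_i(\theta^*_{i+1}-\theta^*_0)(\theta^*_{i+1}-\theta^*_1)\alpha_{i+1}=\theta_2(\theta^*_i-\theta^*_0)(\theta^*_i-\theta^*_1)\alpha_i+(\theta_2-\theta_1)\psi\theta^*_i\alpha_i+(\theta_1-\theta_0)\psi a^*_0\alpha_i+(\theta_2-\theta_0)\zeta\alpha_i,$$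 where for $i=0$ the first term on the left (with coefficient $c_0=0$) and for $i=d$ the second term on the left (with coefficient $b_d=0$) are omitted.
   Context: A system of mutually orthogonal idempotents: $E^*_iE^*_j=\delta_{ij}E^*_i$, $\operatorname{rank}E^*_i=1$. $A$ multiplicity-free: $d+1$ distinct eigenvalues in $\mathbb{F}$; $E_i$ is the projection onto the $\theta_i$-eigenspace along the other eigenspaces. Bipartite: $\operatorname{tr}(E^*_iA)=0$ for all $i$. $\Delta$: graph on $E_0,\dots,E_d$ with $E_i\neq E_j$ adjacent iff $E_iA^*E_j\neq0$. $(E_0,E_1)$ is a tail if $E_0$ is adjacent to no vertex other than $E_1$ and $E_1$ is adjacent to at most one vertex other than $E_0$. The matrix $Y$ representing a map $X$ w.r.t. a basis $u_0,\dots,u_d$ satisfies $Xu_j=\sum_iY_{ij}u_i$. For the fixed basis $v_i\in E^*_iV$, the matrix of $A$ is tridiagonal with zero diagonal; $b_i$ ($0\le i\le d-1$) is its $(i,i+1)$-entry and $c_i$ ($1\le i\le d$) its $(i,i-1)$-entry; set $b_d=c_0=0$. The cosine sequence $\alpha_0,\dots,\alpha_d$ for $\theta_0$: $\alpha_0=1$ and $c_i\alpha_{i-1}+b_i\alpha_{i+1}=\theta_0\alpha_i$ for $0\le i\le d-1$ (equivalently $\sum_i\alpha_iv_i$ is the eigenvector of $A$ for $\theta_0$ with $\alpha_0=1$). For any basis $w_0,\dots,w_d$ with $w_i\in E_iV$, let $b^*_0$ and $c^*_1$ be the $(0,1)$- and $(1,0)$-entries of the matrix representing $A^*$; the product $b^*_0c^*_1$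 does not depend on this choice. *)

theory Defs
  imports "Jordan_Normal_Form.DL_Rank" "Jordan_Normal_Form.Char_Poly"
begin

definition mat_trace :: "'a::comm_ring_1 mat \<Rightarrow> 'a" where
  "mat_trace M = (\<Sum>i<dim_row M. M $$ (i, i))"

definition basis_mat :: "nat \<Rightarrow> (nat \<Rightarrow> 'a vec) \<Rightarrow> 'a mat" where
  "basis_mat m u = mat m m (\<lambda>(r, j). u j $ r)"

text \<open>Y represents X w.r.t. the basis u_0..u_(m-1): X u_j = sum_i Y_ij u_i, i.e. X * P = P * Y.\<close>
definition represents :: "nat \<Rightarrow> (nat \<Rightarrow> 'a::comm_ring_1 vec) \<Rightarrow> 'a mat \<Rightarrow> 'a mat \<Rightarrow> bool" where
  "represents m u X Y \<longleftrightarrow> Y \<in> carrier_mat m m \<and> X * basis_mat m u = basis_mat m u * Y"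

definition lin_comb_mat :: "nat \<Rightarrow> (nat \<Rightarrow> 'a::comm_ring_1) \<Rightarrow> (nat \<Rightarrow> 'a mat) \<Rightarrow> nat set \<Rightarrow> 'a mat" where
  "lin_comb_mat m c M K = mat m m (\<lambda>(r, s). \<Sum>k\<in>K. c k * M k $$ (r, s))"

end

theory Submission imports Defs begin

definition ei :: "nat \<Rightarrow> nat \<Rightarrow> nat \<Rightarrow> 'a::comm_ring_1 mat" where
  "ei n i j = mat n n (\<lambda>(r,s). if r = i \<and> s = j then 1 else 0)"
definition dg :: "nat \<Rightarrow> (nat \<Rightarrow> 'a::comm_ring_1) \<Rightarrow> 'a mat" where
  "dg n f = mat n n (\<lambda>(r,s). if r = s then f r else 0)"

lemma ei_carrier[simp]: "ei n i j \<in> carrier_mat n n" by (simp add: ei_def)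
lemma dg_carrier[simp]: "dg n f \<in> carrier_mat n n" by (simp add: dg_def)
lemma ei_dims[simp]: "dim_row (ei n i j) = n" "dim_col (ei n i j) = n" by (simp_all add: ei_def)
lemma dg_dims[simp]: "dim_row (dg n f) = n" "dim_col (dg n f) = n" by (simp_all add: dg_def)
lemma basis_mat_carrier[simp]: "basis_mat n u \<in> carrier_mat n n" by (simp add: basis_mat_def)
lemma basis_mat_index[simp]: "r < n \<Longrightarrow> s < n \<Longrightarrow> basis_mat n u $$ (r,s) = u s $ r"
  by (simp add: basis_mat_def)
lemma basis_mat_dims[simp]: "dim_row (basis_mat n u) = n" "dim_col (basis_mat n u) = n"
  by (simp_all add: basis_mat_def)

lemma col_basis: "j < n \<Longrightarrow> u j \<in> carrier_vec n \<Longrightarrow> col (basis_mat n u) j = u j"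
  by (rule eq_vecI, auto)

lemma mult_basis_entry:
  assumes "F \<in> carrier_mat n n" "r < n" "s < n" "u s \<in> carrier_vec n"
  shows "(F * basis_mat n u) $$ (r,s) = (F *\<^sub>v u s) $ r"
  using assms by (simp add: col_basis)

lemma basis_ei_entry:
  assumes "r < n" "s < n" "i < n"
  shows "(basis_mat n u * ei n i i) $$ (r,s) = (if s = i then u i $ r else 0)"
proof -
  have "(basis_mat n u * ei n i i) $$ (r,s) = (\<Sum>k<n. u k $ r * (if k = i \<and> s = i then 1 else 0))"
    using assms by (simp add: scalar_prod_def ei_def atLeast0LessThan)
  also have "\<dots> = (\<Sum>k<n. if k = i then (if s = i then u i $ r else 0) else 0)"
    by (rule sum.cong, auto)
  also have "\<dots> = (if s = i then u i $ r else 0)" using assms by simp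
  finally show ?thesis .
qed

lemma proj_basis:
  assumes F: "F \<in> carrier_mat n n" and i: "i < n"
    and u: "\<And>s. s < n \<Longrightarrow> u s \<in> carrier_vec n"
    and Fu: "\<And>s. s < n \<Longrightarrow> F *\<^sub>v u s = (if s = i then u s else 0\<^sub>v n)"
  shows "F * basis_mat n u = basis_mat n u * ei n i i"
proof (rule eq_matI)
  fix r s assume r: "r < dim_row (basis_mat n u * ei n i i)" and s: "s < dim_col (basis_mat n u * ei n i i)"
  hence r: "r < n" and s: "s < n" by auto
  have "(F * basis_mat n u) $$ (r,s) = (F *\<^sub>v u s) $ r"
    by (rule mult_basis_entry[of F n r s u, OF F r s u[OF s]])
  also have "\<dots> = (if s = i then u i $ r else 0)"
    using Fu[OF s] r by (cases "s = i") auto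
  also have "\<dots> = (basis_mat n u * ei n i i) $$ (r,s)"
    by (rule basis_ei_entry[OF r s i, symmetric])
  finally show "(F * basis_mat n u) $$ (r,s) = (basis_mat n u * ei n i i) $$ (r,s)" .
qed (use F in auto)

lemma eig_basis:
  assumes M: "M \<in> carrier_mat n n"
    and u: "\<And>s. s < n \<Longrightarrow> u s \<in> carrier_vec n"
    and Mu: "\<And>s. s < n \<Longrightarrow> M *\<^sub>v u s = f s \<cdot>\<^sub>v u s"
  shows "M * basis_mat n u = basis_mat n u * dg n f"
proof (rule eq_matI)
  fix r s assume r: "r < dim_row (basis_mat n u * dg n f)" and s: "s < dim_col (basis_mat n u * dg n f)"
  hence r: "r < n" and s: "s < n" by auto
  have "(basis_mat n u * dg n f) $$ (r,s) = (\<Sum>k<n. u k $ r * (if k = s then f k else 0))"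
    using r s by (simp add: scalar_prod_def dg_def atLeast0LessThan)
  also have "\<dots> = (\<Sum>k<n. if k = s then u s $ r * f s else 0)"
    by (rule sum.cong, auto)
  also have "\<dots> = u s $ r * f s" using s by simp
  finally have e: "(basis_mat n u * dg n f) $$ (r,s) = u s $ r * f s" .
  have "(M * basis_mat n u) $$ (r,s) = (M *\<^sub>v u s) $ r"
    by (rule mult_basis_entry[of M n r s u, OF M r s u[OF s]])
  also have "\<dots> = f s * u s $ r"
    using Mu[OF s] r u[OF s] by simp
  finally show "(M * basis_mat n u) $$ (r,s) = (basis_mat n u * dg n f) $$ (r,s)"
    using e by (simp add: mult.commute)
qed (use M in auto)


lemma mat_vec_zero[simp]: "A \<in> carrier_mat nr n \<Longrightarrow> A *\<^sub>v 0\<^sub>v n = 0\<^sub>v nr"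
  by (rule eq_vecI, auto simp: scalar_prod_def)

lemma indep:
  fixes u :: "nat \<Rightarrow> 'a::field vec"
  assumes u: "\<And>j. j < n \<Longrightarrow> u j \<in> carrier_vec n" and unz: "\<And>j. j < n \<Longrightarrow> u j \<noteq> 0\<^sub>v n"
    and F: "\<And>i. i < n \<Longrightarrow> F i \<in> carrier_mat n n"
    and Fu: "\<And>i s. i < n \<Longrightarrow> s < n \<Longrightarrow> F i *\<^sub>v u s = (if s = i then u s else 0\<^sub>v n)"
  shows "det (basis_mat n u) \<noteq> 0"
proof
  assume "det (basis_mat n u) = 0"
  then obtain c where c: "c \<in> carrier_vec n" "c \<noteq> 0\<^sub>v n" and Pc: "basis_mat n u *\<^sub>v c = 0\<^sub>v n"
    using det_0_iff_vec_prod_zero_field[OF basis_mat_carrier, of n u] by auto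
  have ci: "c $ i = 0" if i: "i < n" for i
  proof -
    have FP: "F i * basis_mat n u = basis_mat n u * ei n i i"
      by (rule proj_basis[OF F[OF i] i u Fu[OF i]])
    have "F i *\<^sub>v (basis_mat n u *\<^sub>v c) = 0\<^sub>v n" using Pc F[OF i] by simp
    also have "F i *\<^sub>v (basis_mat n u *\<^sub>v c) = (F i * basis_mat n u) *\<^sub>v c"
      using assoc_mult_mat_vec[OF F[OF i] basis_mat_carrier c(1)] by simp
    finally have z: "(basis_mat n u * ei n i i) *\<^sub>v c = 0\<^sub>v n" using FP by simp
    obtain r where r: "r < n" "u i $ r \<noteq> 0"
    proof -
      show ?thesis
      proof (rule ccontr)
        assume "\<not> ?thesis"
        hence "\<forall>r<n. u i $ r = 0" using that by auto
        hence "u i = 0\<^sub>v n" using u[OF i] by (intro eq_vecI) auto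
        thus False using unz[OF i] by simp
      qed
    qed
    have "((basis_mat n u * ei n i i) *\<^sub>v c) $ r = (\<Sum>s<n. (if s = i then u i $ r else 0) * c $ s)"
      proof -
      have "((basis_mat n u * ei n i i) *\<^sub>v c) $ r = (\<Sum>s<n. (basis_mat n u * ei n i i) $$ (r,s) * c $ s)"
        using r c by (simp add: scalar_prod_def atLeast0LessThan del: index_mult_mat(1))
      also have "\<dots> = (\<Sum>s<n. (if s = i then u i $ r else 0) * c $ s)"
        by (rule sum.cong, simp, subst basis_ei_entry, use r i in auto)
      finally show ?thesis .
    qed
    also have "\<dots> = (\<Sum>s<n. if s = i then u i $ r * c $ i else 0)" by (rule sum.cong, auto)
    also have "\<dots> = u i $ r * c $ i" using i by simp
    finally have "u i $ r * c $ i = 0" using z r by simp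
    thus ?thesis using r by simp
  qed
  have "c = 0\<^sub>v n" by (rule eq_vecI, use c ci in auto)
  thus False using c by simp
qed


lemma inv_ex:
  assumes P: "(P :: 'a :: field mat) \<in> carrier_mat n n" and d: "det P \<noteq> 0"
  shows "\<exists>G. G \<in> carrier_mat n n \<and> G * P = 1\<^sub>m n \<and> P * G = 1\<^sub>m n"
proof -
  from det_non_zero_imp_unit[OF P d, of "()"]
  have "P \<in> Units (ring_mat TYPE('a) n ())" .
  then obtain B where unit: "B * P = 1\<^sub>m n" and B: "B \<in> carrier_mat n n"
    unfolding Units_def ring_mat_def by auto
  have "P * B = 1\<^sub>m n" by (rule mat_mult_left_right_inverse[OF B P unit])
  thus ?thesis using unit B by blast
qed


lemma ei_mult: assumes i: "i < n" and j: "j < n" and Y: "Y \<in> carrier_mat n n" shows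
   "ei n i i * Y * ei n j j = Y $$ (i,j) \<cdot>\<^sub>m ei n i j"
proof (rule eq_matI)
  fix r s assume rs: "r < dim_row (Y $$ (i,j) \<cdot>\<^sub>m ei n i j)" "s < dim_col (Y $$ (i,j) \<cdot>\<^sub>m ei n i j)"
  hence r: "r < n" and s: "s < n" by auto
  have e1: "(ei n i i * Y) $$ (r,k) = (if r = i then Y $$ (i,k) else 0)" if k: "k < n" for k
  proof -
    have "(ei n i i * Y) $$ (r,k) = (\<Sum>l<n. (if r = i \<and> l = i then 1 else 0) * Y $$ (l,k))"
      using r k Y by (simp add: scalar_prod_def ei_def atLeast0LessThan)
    also have "\<dots> = (\<Sum>l<n. if l = i then (if r = i then Y $$ (i,k) else 0) else 0)" by (rule sum.cong, auto)
    finally show ?thesis using i by simp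
  qed
  have "(ei n i i * Y * ei n j j) $$ (r,s) = (\<Sum>k<n. (ei n i i * Y) $$ (r,k) * (if k = j \<and> s = j then 1 else 0))"
    using r s Y by (simp add: scalar_prod_def ei_def atLeast0LessThan)
  also have "\<dots> = (\<Sum>k<n. if k = j then (if r = i \<and> s = j then Y $$ (i,j) else 0) else 0)"
    by (rule sum.cong, auto simp: e1 j)
  also have "\<dots> = (Y $$ (i,j) \<cdot>\<^sub>m ei n i j) $$ (r,s)" using r s j by (simp add: ei_def)
  finally show "(ei n i i * Y * ei n j j) $$ (r,s) = (Y $$ (i,j) \<cdot>\<^sub>m ei n i j) $$ (r,s)" .
qed (use Y in simp_all)


lemma trace_comm:
  assumes X: "X \<in> carrier_mat n m" and Y: "Y \<in> carrier_mat m n"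
  shows "mat_trace (X * Y) = mat_trace (Y * X)"
proof -
  have 1: "mat_trace (X * Y) = (\<Sum>r<n. \<Sum>k<m. X $$ (r,k) * Y $$ (k,r))"
    unfolding mat_trace_def
    by (rule sum.cong, use X Y in \<open>auto simp: scalar_prod_def atLeast0LessThan\<close>)
  have 2: "mat_trace (Y * X) = (\<Sum>k<m. \<Sum>r<n. Y $$ (k,r) * X $$ (r,k))"
    unfolding mat_trace_def
    by (rule sum.cong, use X Y in \<open>auto simp: scalar_prod_def atLeast0LessThan\<close>)
  have 3: "(\<Sum>r<n. \<Sum>k<m. X $$ (r,k) * Y $$ (k,r)) = (\<Sum>k<m. \<Sum>r<n. X $$ (r,k) * Y $$ (k,r))"
    by (rule sum.swap)
  show ?thesis unfolding 1 2 3 by (simp add: mult.commute)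
qed

lemma trace_ei: assumes i: "i < n" and Y: "Y \<in> carrier_mat n n"
  shows "mat_trace (ei n i i * Y) = Y $$ (i,i)"
proof -
  have e1: "(ei n i i * Y) $$ (r,r) = (if r = i then Y $$ (i,r) else 0)" if k: "r < n" for r
  proof -
    have "(ei n i i * Y) $$ (r,r) = (\<Sum>l<n. (if r = i \<and> l = i then 1 else 0) * Y $$ (l,r))"
      using k Y by (simp add: scalar_prod_def ei_def atLeast0LessThan)
    also have "\<dots> = (\<Sum>l<n. if l = i then (if r = i then Y $$ (i,r) else 0) else 0)" by (rule sum.cong, auto)
    finally show ?thesis using i by simp
  qed
  have "mat_trace (ei n i i * Y) = (\<Sum>r<n. if r = i then Y $$ (i,r) else 0)"
    unfolding mat_trace_def using e1 by (intro sum.cong) auto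
  thus ?thesis using i by simp
qed


lemma sq_mult_carrier[simp]: "A \<in> carrier_mat n n \<Longrightarrow> B \<in> carrier_mat n m \<Longrightarrow> A * B \<in> carrier_mat n m"
  by (rule mult_carrier_mat)

lemma assoc_dims: "dim_col A = dim_row B \<Longrightarrow> dim_col B = dim_row C \<Longrightarrow> (A * B) * C = A * (B * C)"
  by (rule assoc_mult_mat[of A "dim_row A" "dim_col A" B "dim_col B" C "dim_col C"], auto)

lemma assoc_eq:
  assumes "A \<in> carrier_mat n n" "B \<in> carrier_mat n n" "C \<in> carrier_mat n n" "D \<in> carrier_mat n n"
    "A * B = C * D" "X \<in> carrier_mat n m"
  shows "A * (B * X) = C * (D * X)"
proof -
  note [simp] = carrier_matD[OF assms(1)] carrier_matD[OF assms(2)] carrier_matD[OF assms(3)]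
    carrier_matD[OF assms(4)] carrier_matD[OF assms(6)] assoc_dims
  have "A * (B * X) = (A * B) * X" by simp
  also have "\<dots> = (C * D) * X" using assms(5) by simp
  also have "\<dots> = C * (D * X)" by simp
  finally show ?thesis .
qed

lemma coeff_zero:
  fixes P G M Y Fi Fj :: "'a::field mat"
  assumes P: "P \<in> carrier_mat n n" and G: "G \<in> carrier_mat n n" and GP: "G * P = 1\<^sub>m n"
    and PG: "P * G = 1\<^sub>m n" and M: "M \<in> carrier_mat n n" and Y: "Y \<in> carrier_mat n n"
    and MP: "M * P = P * Y" and Fi: "Fi \<in> carrier_mat n n" and Fj: "Fj \<in> carrier_mat n n"
    and FiP: "Fi * P = P * ei n i i" and FjP: "Fj * P = P * ei n j j" and i: "i < n" and j: "j < n"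
  shows "Fi * M * Fj = 0\<^sub>m n n \<longleftrightarrow> Y $$ (i,j) = 0"
proof -
  note [simp] = carrier_matD[OF P] carrier_matD[OF G] carrier_matD[OF M] carrier_matD[OF Y]
    carrier_matD[OF Fi] carrier_matD[OF Fj] assoc_dims
  have XP: "Fi * M * Fj * P = Y $$ (i,j) \<cdot>\<^sub>m (P * ei n i j)"
  proof -
    have "Fi * M * Fj * P = Fi * (M * (Fj * P))" using P M Fi Fj by simp
    also have "\<dots> = Fi * (M * (P * ei n j j))" using FjP by simp
    also have "\<dots> = Fi * (P * (Y * ei n j j))" using assoc_eq[OF M P P Y MP, of "ei n j j" n] by simp
    also have "\<dots> = P * (ei n i i * (Y * ei n j j))" using assoc_eq[OF Fi P P ei_carrier FiP, of "Y * ei n j j" n] Y by simp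
    also have "\<dots> = P * (Y $$ (i,j) \<cdot>\<^sub>m ei n i j)" using ei_mult[OF i j Y] Y by simp
    also have "\<dots> = Y $$ (i,j) \<cdot>\<^sub>m (P * ei n i j)" by (rule mult_smult_distrib[OF P ei_carrier])
    finally show ?thesis .
  qed
  have X: "Fi * M * Fj = (Fi * M * Fj * P) * G"
  proof -
    have "(Fi * M * Fj * P) * G = (Fi * M * Fj) * (P * G)" using P G M Fi Fj by simp
    also have "\<dots> = Fi * M * Fj" using PG Fi M Fj by simp
    finally show ?thesis by simp
  qed
  show ?thesis
  proof
    assume z: "Fi * M * Fj = 0\<^sub>m n n"
    have "G * (Y $$ (i,j) \<cdot>\<^sub>m (P * ei n i j)) = Y $$ (i,j) \<cdot>\<^sub>m ((G * P) * ei n i j)"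
      using mult_smult_distrib[OF G, of "P * ei n i j" n "Y $$ (i,j)"] G P by simp
    also have "\<dots> = Y $$ (i,j) \<cdot>\<^sub>m ei n i j" using GP by simp
    finally have "Y $$ (i,j) \<cdot>\<^sub>m ei n i j = G * (Fi * M * Fj * P)" using XP by simp
    also have "\<dots> = 0\<^sub>m n n" using z G P by simp
    finally have "(Y $$ (i,j) \<cdot>\<^sub>m ei n i j) $$ (i,j) = 0" using i j by simp
    thus "Y $$ (i,j) = 0" using i j by (simp add: ei_def)
  next
    assume z: "Y $$ (i,j) = 0"
    have "Fi * M * Fj * P = 0\<^sub>m n n" using XP z by (auto simp: ei_def)
    hence "Fi * M * Fj = 0\<^sub>m n n * G" using X by metis
    thus "Fi * M * Fj = 0\<^sub>m n n" using G by simp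
  qed
qed

lemma coeff_trace:
  fixes P G M Y Fi :: "'a::field mat"
  assumes P: "P \<in> carrier_mat n n" and G: "G \<in> carrier_mat n n" and GP: "G * P = 1\<^sub>m n"
    and PG: "P * G = 1\<^sub>m n" and M: "M \<in> carrier_mat n n" and Y: "Y \<in> carrier_mat n n"
    and MP: "M * P = P * Y" and Fi: "Fi \<in> carrier_mat n n"
    and FiP: "Fi * P = P * ei n i i" and i: "i < n"
  shows "mat_trace (Fi * M) = Y $$ (i,i)"
proof -
  note [simp] = carrier_matD[OF P] carrier_matD[OF G] carrier_matD[OF M] carrier_matD[OF Y]
    carrier_matD[OF Fi] assoc_dims
  have "Fi * M = ((Fi * M) * P) * G"
  proof -
    have "((Fi * M) * P) * G = (Fi * M) * (P * G)" using P G M Fi by simp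
    also have "\<dots> = Fi * M" using PG Fi M by simp
    finally show ?thesis by simp
  qed
  hence "mat_trace (Fi * M) = mat_trace (((Fi * M) * P) * G)" by (rule arg_cong)
  also have "\<dots> = mat_trace (G * ((Fi * M) * P))"
    by (rule trace_comm[of _ n n], use Fi M P G in auto)
  also have "G * ((Fi * M) * P) = ei n i i * Y"
  proof -
    have "G * ((Fi * M) * P) = G * (Fi * (M * P))" using Fi M P by simp
    also have "\<dots> = G * (Fi * (P * Y))" using MP by simp
    also have "\<dots> = G * (P * (ei n i i * Y))" using assoc_eq[OF Fi P P ei_carrier FiP, of Y n] Y by simp
    also have "\<dots> = (G * P) * (ei n i i * Y)" using G P Y by simp
    also have "\<dots> = ei n i i * Y" using GP Y by simp
    finally show ?thesis .
  qed
  also have "mat_trace (ei n i i * Y) = Y $$ (i,i)" by (rule trace_ei[OF i Y])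
  finally show ?thesis .
qed

fun kseq :: "(nat \<Rightarrow> 'a::field) \<Rightarrow> (nat \<Rightarrow> 'a) \<Rightarrow> nat \<Rightarrow> 'a" where
  "kseq b c 0 = 1"
| "kseq b c (Suc j) = kseq b c j * b j / c (Suc j)"

lemma band_sum:
  fixes f :: "nat \<Rightarrow> 'a::comm_ring_1"
  assumes i: "i \<le> d" and z: "\<And>j. j \<le> d \<Longrightarrow> j + 1 \<noteq> i \<Longrightarrow> j \<noteq> i + 1 \<Longrightarrow> f j = 0"
  shows "(\<Sum>j<d+1. f j) = (if i = 0 then 0 else f (i - 1)) + (if i = d then 0 else f (i + 1))"
proof -
  have "(\<Sum>j<d+1. f j) = (\<Sum>j<d+1. (if j + 1 = i then f (i - 1) else 0) + (if j = i + 1 then f (i + 1) else 0))"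
  proof (rule sum.cong)
    fix j assume "j \<in> {..<d+1}"
    hence j: "j \<le> d" by auto
    show "f j = (if j + 1 = i then f (i - 1) else 0) + (if j = i + 1 then f (i + 1) else 0)"
      using z[OF j] by auto
  qed simp
  also have "\<dots> = (\<Sum>j<d+1. if j + 1 = i then f (i - 1) else 0) + (\<Sum>j<d+1. if j = i + 1 then f (i + 1) else 0)"
    by (rule sum.distrib)
  also have "(\<Sum>j<d+1. if j + 1 = i then f (i - 1) else 0) = (if i = 0 then 0 else f (i - 1))"
  proof (cases "i = 0")
    case True thus ?thesis by simp
  next
    case False
    have "(\<Sum>j<d+1. if j + 1 = i then f (i - 1) else 0) = (\<Sum>j<d+1. if j = i - 1 then f (i - 1) else 0)"
      by (rule sum.cong, use False in auto)
    also have "\<dots> = f (i - 1)" using i False by simp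
    finally show ?thesis using False by simp
  qed
  also have "(\<Sum>j<d+1. if j = i + 1 then f (i + 1) else 0) = (if i = d then 0 else f (i + 1))"
    using i by simp
  finally show ?thesis .
qed

lemma sum_two:
  fixes f :: "nat \<Rightarrow> 'a::comm_ring_1"
  assumes "2 \<le> n" "\<And>k. 2 \<le> k \<Longrightarrow> k < n \<Longrightarrow> f k = 0"
  shows "(\<Sum>k<n. f k) = f 0 + f 1"
proof -
  have "(\<Sum>k<n. f k) = (\<Sum>k<n. (if k = 0 then f 0 else 0) + (if k = 1 then f 1 else 0))"
    by (rule sum.cong, use assms in auto)
  also have "\<dots> = f 0 + f 1" using assms by (simp add: sum.distrib)
  finally show ?thesis .
qed

lemma sum_three:
  fixes f :: "nat \<Rightarrow> 'a::comm_ring_1"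
  assumes "3 \<le> n" "\<And>k. 3 \<le> k \<Longrightarrow> k < n \<Longrightarrow> f k = 0"
  shows "(\<Sum>k<n. f k) = f 0 + f 1 + f 2"
proof -
  have "(\<Sum>k<n. f k) = (\<Sum>k<n. (if k = 0 then f 0 else 0) + (if k = 1 then f 1 else 0) + (if k = 2 then f 2 else 0))"
    by (rule sum.cong, use assms in auto)
  also have "\<dots> = f 0 + f 1 + f 2" using assms by (simp add: sum.distrib)
  finally show ?thesis .
qed

lemma lc: "(x::'a::ab_group_add) - y = s \<Longrightarrow> s = 0 \<Longrightarrow> x = y" by simp

lemma scalar_core:
  fixes \<beta> \<gamma> \<delta> \<alpha> \<theta> \<theta>s :: "nat \<Rightarrow> 'a::field" and Y :: "nat \<Rightarrow> nat \<Rightarrow> 'a"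
    and Z00 Z01 Z10 Z11 Z12 :: 'a
  assumes d3: "d \<ge> 3"
    and R0: "\<And>j. j \<le> d \<Longrightarrow> Z00 * \<beta> j + Z01 * \<gamma> j = \<beta> j * \<theta>s j"
    and R1: "\<And>j. j \<le> d \<Longrightarrow> Z10 * \<beta> j + Z11 * \<gamma> j + Z12 * \<delta> j = \<gamma> j * \<theta>s j"
    and L0: "\<And>i. i \<le> d \<Longrightarrow> (\<Sum>j<d+1. \<beta> j * Y j i) = \<theta> 0 * \<beta> i"
    and L1: "\<And>i. i \<le> d \<Longrightarrow> (\<Sum>j<d+1. \<gamma> j * Y j i) = \<theta> 1 * \<gamma> i"
    and L2: "\<And>i. i \<le> d \<Longrightarrow> (\<Sum>j<d+1. \<delta> j * Y j i) = \<theta> 2 * \<delta> i"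
    and band: "\<And>i j. i \<le> d \<Longrightarrow> j \<le> d \<Longrightarrow> j + 1 \<noteq> i \<Longrightarrow> j \<noteq> i + 1 \<Longrightarrow> Y j i = 0"
    and bnz: "\<And>i. i < d \<Longrightarrow> Y i (i+1) \<noteq> 0"
    and cnz: "\<And>i. 1 \<le> i \<Longrightarrow> i \<le> d \<Longrightarrow> Y i (i-1) \<noteq> 0"
    and alpha0: "\<alpha> 0 = 1"
    and alpha_rec: "\<And>i. i < d \<Longrightarrow>
       (if i = 0 then 0 else Y i (i - 1) * \<alpha> (i - 1)) + Y i (i + 1) * \<alpha> (i + 1) = \<theta> 0 * \<alpha> i"
    and bnz0: "\<exists>j\<le>d. \<beta> j \<noteq> 0"
    and i: "i \<le> d"
  shows "(let as0 = Z00; as1 = Z11;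
         b = (\<lambda>j. Y j (j + 1));
         c = (\<lambda>j. Y j (j - 1));
         bc = Z01 * Z10;
         \<psi> = \<theta>s 1 + \<theta>s 0 - as1 - as0;
         \<zeta> = as0 * as1 - bc - \<theta>s 0 * \<theta>s 1
     in (if i = 0 then 0
         else c i * (\<theta>s (i - 1) - \<theta>s 0) * (\<theta>s (i - 1) - \<theta>s 1) * \<alpha> (i - 1))
      + (if i = d then 0
         else b i * (\<theta>s (i + 1) - \<theta>s 0) * (\<theta>s (i + 1) - \<theta>s 1) * \<alpha> (i + 1))
      = \<theta> 2 * (\<theta>s i - \<theta>s 0) * (\<theta>s i - \<theta>s 1) * \<alpha> i
        + (\<theta> 2 - \<theta> 1) * \<psi> * \<theta>s i * \<alpha> i
        + (\<theta> 1 - \<theta> 0) * \<psi> * as0 * \<alpha> i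
        + (\<theta> 2 - \<theta> 0) * \<zeta> * \<alpha> i)"
proof -
  define b where "b = (\<lambda>j. Y j (j + 1))"
  define c where "c = (\<lambda>j. Y j (j - 1))"
  define \<psi> where "\<psi> = \<theta>s 1 + \<theta>s 0 - Z11 - Z00"
  define \<zeta> where "\<zeta> = Z00 * Z11 - Z01 * Z10 - \<theta>s 0 * \<theta>s 1"
  define T where "T = (\<lambda>j. (\<theta>s j - \<theta>s 0) * (\<theta>s j - \<theta>s 1))"
  define Rr where "Rr = (\<lambda>i. \<theta> 2 * T i + (\<theta> 2 - \<theta> 1) * \<psi> * \<theta>s i + (\<theta> 1 - \<theta> 0) * \<psi> * Z00
     + (\<theta> 2 - \<theta> 0) * \<zeta>)"
  define k where "k = kseq b c"
  have Tb: "T j * \<beta> j = Z01 * Z12 * \<delta> j - \<psi> * \<theta>s j * \<beta> j - \<zeta> * \<beta> j" if j: "j \<le> d" for j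
  proof -
    have e0: "Z00 * \<beta> j + Z01 * \<gamma> j - \<beta> j * \<theta>s j = 0" using R0[OF j] by simp
    have e1: "Z10 * \<beta> j + Z11 * \<gamma> j + Z12 * \<delta> j - \<gamma> j * \<theta>s j = 0" using R1[OF j] by simp
    have "T j * \<beta> j - (Z01 * Z12 * \<delta> j - \<psi> * \<theta>s j * \<beta> j - \<zeta> * \<beta> j)
      = (Z11 - \<theta>s j) * (Z00 * \<beta> j + Z01 * \<gamma> j - \<beta> j * \<theta>s j)
        - Z01 * (Z10 * \<beta> j + Z11 * \<gamma> j + Z12 * \<delta> j - \<gamma> j * \<theta>s j)"
      unfolding T_def \<psi>_def \<zeta>_def by (simp add: algebra_simps)
    also have "\<dots> = 0" using e0 e1 by simp
    finally show ?thesis by simp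
  qed
  have FI: "(\<Sum>j<d+1. T j * \<beta> j * Y j i) = Rr i * \<beta> i" if i: "i \<le> d" for i
  proof -
    have "(\<Sum>j<d+1. T j * \<beta> j * Y j i) = (\<Sum>j<d+1. (Z01 * Z12) * (\<delta> j * Y j i)
        + (- \<psi> * Z00 - \<zeta>) * (\<beta> j * Y j i) + (- \<psi> * Z01) * (\<gamma> j * Y j i))"
    proof (rule sum.cong)
      fix j assume "j \<in> {..<d+1}"
      hence j: "j \<le> d" by auto
      show "T j * \<beta> j * Y j i = (Z01 * Z12) * (\<delta> j * Y j i)
        + (- \<psi> * Z00 - \<zeta>) * (\<beta> j * Y j i) + (- \<psi> * Z01) * (\<gamma> j * Y j i)"
      proof (rule lc)
        have e1: "T j * \<beta> j - (Z01 * Z12 * \<delta> j - \<psi> * \<theta>s j * \<beta> j - \<zeta> * \<beta> j) = 0" using Tb[OF j] by simp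
        have e2: "Z00 * \<beta> j + Z01 * \<gamma> j - \<beta> j * \<theta>s j = 0" using R0[OF j] by simp
        show "Y j i * (T j * \<beta> j - (Z01 * Z12 * \<delta> j - \<psi> * \<theta>s j * \<beta> j - \<zeta> * \<beta> j))
          + (\<psi> * Y j i) * (Z00 * \<beta> j + Z01 * \<gamma> j - \<beta> j * \<theta>s j) = 0"
          unfolding e1 e2 by simp
      qed (simp add: algebra_simps)
    qed simp
    also have "\<dots> = (Z01 * Z12) * (\<Sum>j<d+1. \<delta> j * Y j i) + (- \<psi> * Z00 - \<zeta>) * (\<Sum>j<d+1. \<beta> j * Y j i)
        + (- \<psi> * Z01) * (\<Sum>j<d+1. \<gamma> j * Y j i)"
      by (simp only: sum.distrib sum_distrib_left)
    also have "\<dots> = (Z01 * Z12) * (\<theta> 2 * \<delta> i) + (- \<psi> * Z00 - \<zeta>) * (\<theta> 0 * \<beta> i)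
        + (- \<psi> * Z01) * (\<theta> 1 * \<gamma> i)"
      using L0[OF i] L1[OF i] L2[OF i] by simp
    also have "\<dots> = Rr i * \<beta> i"
    proof (rule lc)
      have e1: "T i * \<beta> i - (Z01 * Z12 * \<delta> i - \<psi> * \<theta>s i * \<beta> i - \<zeta> * \<beta> i) = 0" using Tb[OF i] by simp
      have e2: "Z00 * \<beta> i + Z01 * \<gamma> i - \<beta> i * \<theta>s i = 0" using R0[OF i] by simp
      show "(- \<theta> 2) * (T i * \<beta> i - (Z01 * Z12 * \<delta> i - \<psi> * \<theta>s i * \<beta> i - \<zeta> * \<beta> i))
          + (- \<psi> * \<theta> 1) * (Z00 * \<beta> i + Z01 * \<gamma> i - \<beta> i * \<theta>s i) = 0"
        unfolding e1 e2 by simp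
    qed (simp add: Rr_def algebra_simps)
    finally show ?thesis .
  qed
  have L0b: "(if i = 0 then 0 else \<beta> (i - 1) * b (i - 1)) + (if i = d then 0 else \<beta> (i + 1) * c (i + 1))
      = \<theta> 0 * \<beta> i" if i: "i \<le> d" for i
  proof -
    have "(\<Sum>j<d+1. \<beta> j * Y j i) = (if i = 0 then 0 else \<beta> (i - 1) * Y (i - 1) i)
        + (if i = d then 0 else \<beta> (i + 1) * Y (i + 1) i)"
      by (rule band_sum[OF i], use band[OF i] in auto)
    thus ?thesis using L0[OF i] unfolding b_def c_def by (cases "i = 0") auto
  qed
  have FIb: "(if i = 0 then 0 else T (i - 1) * \<beta> (i - 1) * b (i - 1))
      + (if i = d then 0 else T (i + 1) * \<beta> (i + 1) * c (i + 1)) = Rr i * \<beta> i" if i: "i \<le> d" for i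
  proof -
    have "(\<Sum>j<d+1. T j * \<beta> j * Y j i) = (if i = 0 then 0 else T (i - 1) * \<beta> (i - 1) * Y (i - 1) i)
        + (if i = d then 0 else T (i + 1) * \<beta> (i + 1) * Y (i + 1) i)"
      by (rule band_sum[OF i], use band[OF i] in auto)
    thus ?thesis using FI[OF i] unfolding b_def c_def by (cases "i = 0") auto
  qed
  have knz: "k j \<noteq> 0" if "j \<le> d" for j
    using that
  proof (induction j)
    case 0 thus ?case by (simp add: k_def)
  next
    case (Suc j)
    have "b j \<noteq> 0" using bnz[of j] Suc.prems unfolding b_def by auto
    moreover have "c (Suc j) \<noteq> 0" using cnz[of "Suc j"] Suc.prems unfolding c_def by auto
    ultimately show ?case using Suc by (simp add: k_def)
  qed
  have kc: "k (Suc j) * c (Suc j) = k j * b j" if "j < d" for j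
  proof -
    have "c (Suc j) \<noteq> 0" using cnz[of "Suc j"] that unfolding c_def by auto
    thus ?thesis by (simp add: k_def)
  qed
  have arec: "(if j = 0 then 0 else c j * \<alpha> (j - 1)) + b j * \<alpha> (j + 1) = \<theta> 0 * \<alpha> j" if "j < d" for j
    using alpha_rec[OF that] unfolding b_def c_def by simp
  have bform: "j + 1 \<le> d \<Longrightarrow> \<beta> j = \<beta> 0 * \<alpha> j * k j \<and> \<beta> (j+1) = \<beta> 0 * \<alpha> (j+1) * k (j+1)" for j
  proof (induction j)
    case 0
    have c1: "c 1 \<noteq> 0" using cnz[of 1] d3 unfolding c_def by auto
    have e1: "\<beta> 1 * c 1 = \<theta> 0 * \<beta> 0" using L0b[of 0] d3 by simp
    have e2: "b 0 * \<alpha> 1 = \<theta> 0" using arec[of 0] d3 alpha0 by simp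
    have k1: "k 1 = b 0 / c 1" by (simp add: k_def)
    have "\<beta> 1 = \<beta> 0 * \<alpha> 1 * k 1" using c1 e1 e2 unfolding k1
      by (simp add: field_simps)
    thus ?case using alpha0 by (simp add: k_def)
  next
    case (Suc j)
    hence IH: "\<beta> j = \<beta> 0 * \<alpha> j * k j" "\<beta> (j+1) = \<beta> 0 * \<alpha> (j+1) * k (j+1)" by auto
    have c2: "c (j+2) \<noteq> 0" using cnz[of "j+2"] Suc.prems unfolding c_def by auto
    have A: "\<beta> j * b j + \<beta> (j+2) * c (j+2) = \<theta> 0 * \<beta> (j+1)"
      using L0b[of "j+1"] Suc.prems by (simp add: numeral_2_eq_2)
    have rec: "c (j+1) * \<alpha> j + b (j+1) * \<alpha> (j+2) = \<theta> 0 * \<alpha> (j+1)"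
      using arec[of "j+1"] Suc.prems by (simp add: numeral_2_eq_2)
    have kc1: "k (j+1) * c (j+1) = k j * b j" using kc[of j] Suc.prems by simp
    have k2: "k (j+2) * c (j+2) = k (j+1) * b (j+1)" using kc[of "j+1"] Suc.prems by (simp add: numeral_2_eq_2)
    have "c (j+2) * \<beta> (j+2) = c (j+2) * (\<beta> 0 * \<alpha> (j+2) * k (j+2))"
    proof (rule lc)
      have e1: "\<beta> j * b j + \<beta> (j+2) * c (j+2) - \<theta> 0 * \<beta> (j+1) = 0" using A by simp
      have e2: "\<beta> j - \<beta> 0 * \<alpha> j * k j = 0" using IH by simp
      have e3: "\<beta> (j+1) - \<beta> 0 * \<alpha> (j+1) * k (j+1) = 0" using IH by simp
      have e4: "k (j+1) * c (j+1) - k j * b j = 0" using kc1 by simp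
      have e5: "k (j+2) * c (j+2) - k (j+1) * b (j+1) = 0" using k2 by simp
      have e6: "c (j+1) * \<alpha> j + b (j+1) * \<alpha> (j+2) - \<theta> 0 * \<alpha> (j+1) = 0" using rec by simp
      show "(\<beta> j * b j + \<beta> (j+2) * c (j+2) - \<theta> 0 * \<beta> (j+1)) - b j * (\<beta> j - \<beta> 0 * \<alpha> j * k j)
          + \<theta> 0 * (\<beta> (j+1) - \<beta> 0 * \<alpha> (j+1) * k (j+1))
          + \<beta> 0 * \<alpha> j * (k (j+1) * c (j+1) - k j * b j)
          - \<beta> 0 * \<alpha> (j+2) * (k (j+2) * c (j+2) - k (j+1) * b (j+1))
          - \<beta> 0 * k (j+1) * (c (j+1) * \<alpha> j + b (j+1) * \<alpha> (j+2) - \<theta> 0 * \<alpha> (j+1)) = 0"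
        unfolding e1 e2 e3 e4 e5 e6 by simp
    qed (simp add: algebra_simps)
    hence "\<beta> (j+2) = \<beta> 0 * \<alpha> (j+2) * k (j+2)" using c2 by simp
    thus ?case using IH by (simp add: numeral_2_eq_2)
  qed
  have bf: "\<beta> j = \<beta> 0 * \<alpha> j * k j" if "j \<le> d" for j
  proof (cases j)
    case 0 thus ?thesis using alpha0 by (simp add: k_def)
  next
    case (Suc m) thus ?thesis using bform[of m] that by simp
  qed
  have b0: "\<beta> 0 \<noteq> 0"
  proof
    assume "\<beta> 0 = 0"
    hence "\<forall>j\<le>d. \<beta> j = 0"
    proof (intro allI impI)
      fix j assume "\<beta> 0 = 0" "j \<le> d"
      thus "\<beta> j = 0" using bf[of j] by simp
    qed
    thus False using bnz0 by auto
  qed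
  define gl where "gl = (if i = 0 then 0 else c i * T (i - 1) * \<alpha> (i - 1))"
  define gr where "gr = (if i = d then 0 else b i * T (i + 1) * \<alpha> (i + 1))"
  have l: "(if i = 0 then 0 else T (i - 1) * \<beta> (i - 1) * b (i - 1)) = \<beta> 0 * k i * gl"
  proof (cases "i = 0")
    case False
    have e1: "k (i - 1) * b (i - 1) - k i * c i = 0" using kc[of "i - 1"] False i by simp
    have e2: "\<beta> (i - 1) - \<beta> 0 * \<alpha> (i - 1) * k (i - 1) = 0" using bf[of "i - 1"] i by simp
    have "T (i - 1) * \<beta> (i - 1) * b (i - 1) = \<beta> 0 * k i * (c i * T (i - 1) * \<alpha> (i - 1))"
    proof (rule lc)
      show "T (i - 1) * b (i - 1) * (\<beta> (i - 1) - \<beta> 0 * \<alpha> (i - 1) * k (i - 1))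
        + T (i - 1) * \<beta> 0 * \<alpha> (i - 1) * (k (i - 1) * b (i - 1) - k i * c i) = 0"
        unfolding e1 e2 by simp
    qed (simp add: algebra_simps)
    thus ?thesis using False unfolding gl_def by simp
  qed (simp add: gl_def)
  have r: "(if i = d then 0 else T (i + 1) * \<beta> (i + 1) * c (i + 1)) = \<beta> 0 * k i * gr"
  proof (cases "i = d")
    case False
    have e1: "k (i + 1) * c (i + 1) - k i * b i = 0" using kc[of i] False i by simp
    have e2: "\<beta> (i + 1) - \<beta> 0 * \<alpha> (i + 1) * k (i + 1) = 0" using bf[of "i + 1"] i False by simp
    have "T (i + 1) * \<beta> (i + 1) * c (i + 1) = \<beta> 0 * k i * (b i * T (i + 1) * \<alpha> (i + 1))"
    proof (rule lc)
      show "T (i + 1) * c (i + 1) * (\<beta> (i + 1) - \<beta> 0 * \<alpha> (i + 1) * k (i + 1))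
        + T (i + 1) * \<beta> 0 * \<alpha> (i + 1) * (k (i + 1) * c (i + 1) - k i * b i) = 0"
        unfolding e1 e2 by simp
    qed (simp add: algebra_simps)
    thus ?thesis using False unfolding gr_def by simp
  qed (simp add: gr_def)
  have "\<beta> 0 * k i * (gl + gr) = \<beta> 0 * k i * gl + \<beta> 0 * k i * gr" by (simp add: distrib_left)
  also have "\<dots> = Rr i * \<beta> i" using FIb[OF i] unfolding l[symmetric] r[symmetric] .
  also have "\<dots> = \<beta> 0 * k i * (Rr i * \<alpha> i)" unfolding bf[OF i] by (simp add: mult_ac)
  finally have G: "gl + gr = Rr i * \<alpha> i" using b0 knz[OF i] by simp
  show ?thesis using G unfolding gl_def gr_def Rr_def T_def \<psi>_def \<zeta>_def b_def c_def Let_def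
    by (simp only: mult.assoc distrib_right)
qed


lemma mult_entry: "A \<in> carrier_mat n n \<Longrightarrow> B \<in> carrier_mat n n \<Longrightarrow> r < n \<Longrightarrow> s < n \<Longrightarrow>
  (A * B) $$ (r,s) = (\<Sum>k<n. A $$ (r,k) * B $$ (k,s))"
  by (simp add: scalar_prod_def atLeast0LessThan)

lemma dg_left: "M \<in> carrier_mat n n \<Longrightarrow> r < n \<Longrightarrow> s < n \<Longrightarrow> (dg n f * M) $$ (r,s) = f r * M $$ (r,s)"
proof -
  assume M: "M \<in> carrier_mat n n" and r: "r < n" and s: "s < n"
  have "(dg n f * M) $$ (r,s) = (\<Sum>k<n. (if r = k then f r else 0) * M $$ (k,s))"
    using M r s by (simp add: scalar_prod_def atLeast0LessThan dg_def)
  also have "\<dots> = (\<Sum>k<n. if k = r then f r * M $$ (r,s) else 0)" by (rule sum.cong, auto)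
  finally show ?thesis using r by simp
qed

lemma dg_right: "M \<in> carrier_mat n n \<Longrightarrow> r < n \<Longrightarrow> s < n \<Longrightarrow> (M * dg n f) $$ (r,s) = M $$ (r,s) * f s"
proof -
  assume M: "M \<in> carrier_mat n n" and r: "r < n" and s: "s < n"
  have "(M * dg n f) $$ (r,s) = (\<Sum>k<n. M $$ (r,k) * (if k = s then f k else 0))"
    using M r s by (simp add: scalar_prod_def atLeast0LessThan dg_def)
  also have "\<dots> = (\<Sum>k<n. if k = s then M $$ (r,s) * f s else 0)" by (rule sum.cong, auto)
  finally show ?thesis using s by simp
qed

lemma dg_ei: assumes i: "i < n" shows "dg n f * ei n i i = f i \<cdot>\<^sub>m ei n i i"
proof (rule eq_matI)
  fix r s assume "r < dim_row (f i \<cdot>\<^sub>m ei n i i)" "s < dim_col (f i \<cdot>\<^sub>m ei n i i)"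
  hence r: "r < n" and s: "s < n" by auto
  have "(dg n f * ei n i i) $$ (r,s) = f r * ei n i i $$ (r,s)" by (rule dg_left[OF ei_carrier r s])
  thus "(dg n f * ei n i i) $$ (r,s) = (f i \<cdot>\<^sub>m ei n i i) $$ (r,s)" using r s by (simp add: ei_def)
qed auto

lemma smult_mat_vec: "A \<in> carrier_mat nr nc \<Longrightarrow> v \<in> carrier_vec nc \<Longrightarrow> (k \<cdot>\<^sub>m A) *\<^sub>v v = k \<cdot>\<^sub>v (A *\<^sub>v v)"
  by (rule eq_vecI, auto simp: scalar_prod_def sum_distrib_left mult.assoc)

lemma zero_mat_vec: "v \<in> carrier_vec n \<Longrightarrow> 0\<^sub>m nr n *\<^sub>v v = 0\<^sub>v nr"
  by (rule eq_vecI, auto simp: scalar_prod_def)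

theorem proposition8p2:
  fixes d :: nat
    and Est E :: "nat \<Rightarrow> 'a::field mat"
    and A As :: "'a mat"
    and \<theta> \<theta>s \<alpha> :: "nat \<Rightarrow> 'a"
    and v w :: "nat \<Rightarrow> 'a vec"
    and Y Z :: "'a mat"
  assumes d3: "d \<ge> 3"
    and Est_carrier: "\<And>i. i \<le> d \<Longrightarrow> Est i \<in> carrier_mat (d+1) (d+1)"
    and Est_orth: "\<And>i j. i \<le> d \<Longrightarrow> j \<le> d \<Longrightarrow>
                     Est i * Est j = (if i = j then Est i else 0\<^sub>m (d+1) (d+1))"
    and Est_rank: "\<And>i. i \<le> d \<Longrightarrow> vec_space.rank (d+1) (Est i) = 1"
    and A_carrier: "A \<in> carrier_mat (d+1) (d+1)"
    and A_tri0: "\<And>i j. i \<le> d \<Longrightarrow> j \<le> d \<Longrightarrow> i + 1 < j \<or> j + 1 < i \<Longrightarrow>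
                   Est i * A * Est j = 0\<^sub>m (d+1) (d+1)"
    and A_tri1: "\<And>i j. i \<le> d \<Longrightarrow> j \<le> d \<Longrightarrow> i = j + 1 \<or> j = i + 1 \<Longrightarrow>
                   Est i * A * Est j \<noteq> 0\<^sub>m (d+1) (d+1)"
    (* multiplicity-free: d+1 distinct eigenvalues in the field *)
    and theta_distinct: "\<And>i j. i \<le> d \<Longrightarrow> j \<le> d \<Longrightarrow> \<theta> i = \<theta> j \<Longrightarrow> i = j"
    and theta_eig: "\<And>i. i \<le> d \<Longrightarrow> eigenvalue A (\<theta> i)"
    (* E i is the projection onto the theta i eigenspace along the other eigenspaces *)
    and E_carrier: "\<And>i. i \<le> d \<Longrightarrow> E i \<in> carrier_mat (d+1) (d+1)"
    and E_on: "\<And>i x. i \<le> d \<Longrightarrow> x \<in> carrier_vec (d+1) \<Longrightarrow> A *\<^sub>v x = \<theta> i \<cdot>\<^sub>v x \<Longrightarrow>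
                 E i *\<^sub>v x = x"
    and E_off: "\<And>i j x. i \<le> d \<Longrightarrow> j \<le> d \<Longrightarrow> j \<noteq> i \<Longrightarrow> x \<in> carrier_vec (d+1) \<Longrightarrow>
                 A *\<^sub>v x = \<theta> j \<cdot>\<^sub>v x \<Longrightarrow> E i *\<^sub>v x = 0\<^sub>v (d+1)"
    (* bipartite *)
    and bipartite: "\<And>i. i \<le> d \<Longrightarrow> mat_trace (Est i * A) = 0"
    (* dual eigenvalues and A* *)
    and thetas_distinct: "\<And>i j. i \<le> d \<Longrightarrow> j \<le> d \<Longrightarrow> \<theta>s i = \<theta>s j \<Longrightarrow> i = j"
    and As_def: "As = lin_comb_mat (d+1) \<theta>s Est {0..d}"
    (* tail (E_0, E_1) in Delta, and E_2 is the other neighbour of E_1 *)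
    and tail0: "\<And>j. j \<le> d \<Longrightarrow> j \<noteq> 0 \<Longrightarrow> j \<noteq> 1 \<Longrightarrow>
       E 0 * As * E j = 0\<^sub>m (d+1) (d+1)"
    and tail1: "\<And>j k. j \<le> d \<Longrightarrow> k \<le> d \<Longrightarrow> j \<noteq> 1 \<Longrightarrow> k \<noteq> 1 \<Longrightarrow> j \<noteq> 0 \<Longrightarrow> k \<noteq> 0 \<Longrightarrow>
       E 1 * As * E j \<noteq> 0\<^sub>m (d+1) (d+1) \<Longrightarrow>
       E 1 * As * E k \<noteq> 0\<^sub>m (d+1) (d+1) \<Longrightarrow> j = k"
    and adj12: "E 1 * As * E 2 \<noteq> 0\<^sub>m (d+1) (d+1)"
    (* basis v_i of E*_i V and the matrix Y of A with respect to it *)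
    and v_carrier: "\<And>i. i \<le> d \<Longrightarrow> v i \<in> carrier_vec (d+1)"
    and v_nz: "\<And>i. i \<le> d \<Longrightarrow> v i \<noteq> 0\<^sub>v (d+1)"
    and v_in: "\<And>i. i \<le> d \<Longrightarrow> Est i *\<^sub>v v i = v i"
    and Y_rep: "represents (d+1) v A Y"
    (* cosine sequence for theta_0 *)
    and alpha0: "\<alpha> 0 = 1"
    and alpha_rec: "\<And>i. i < d \<Longrightarrow>
       (if i = 0 then 0 else Y $$ (i, i - 1) * \<alpha> (i - 1)) + Y $$ (i, i + 1) * \<alpha> (i + 1)
         = \<theta> 0 * \<alpha> i"
    (* a basis w_i of E_i V and the matrix Z of A* with respect to it *)
    and w_carrier: "\<And>i. i \<le> d \<Longrightarrow> w i \<in> carrier_vec (d+1)"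
    and w_nz: "\<And>i. i \<le> d \<Longrightarrow> w i \<noteq> 0\<^sub>v (d+1)"
    and w_in: "\<And>i. i \<le> d \<Longrightarrow> E i *\<^sub>v w i = w i"
    and Z_rep: "represents (d+1) w As Z"
  shows "\<forall>i \<le> d.
    (let as = (\<lambda>j. mat_trace (E j * As));
         b = (\<lambda>j. Y $$ (j, j + 1));
         c = (\<lambda>j. Y $$ (j, j - 1));
         bc = Z $$ (0, 1) * Z $$ (1, 0);
         \<psi> = \<theta>s 1 + \<theta>s 0 - as 1 - as 0;
         \<zeta> = as 0 * as 1 - bc - \<theta>s 0 * \<theta>s 1
     in (if i = 0 then 0
         else c i * (\<theta>s (i - 1) - \<theta>s 0) * (\<theta>s (i - 1) - \<theta>s 1) * \<alpha> (i - 1))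
      + (if i = d then 0
         else b i * (\<theta>s (i + 1) - \<theta>s 0) * (\<theta>s (i + 1) - \<theta>s 1) * \<alpha> (i + 1))
      = \<theta> 2 * (\<theta>s i - \<theta>s 0) * (\<theta>s i - \<theta>s 1) * \<alpha> i
        + (\<theta> 2 - \<theta> 1) * \<psi> * \<theta>s i * \<alpha> i
        + (\<theta> 1 - \<theta> 0) * \<psi> * as 0 * \<alpha> i
        + (\<theta> 2 - \<theta> 0) * \<zeta> * \<alpha> i)"

proof -
  note dimsE = carrier_matD[OF Est_carrier] carrier_matD[OF E_carrier]
  have Ac: "A \<in> carrier_mat (d+1) (d+1)" by (rule A_carrier)
  note [simp] = carrier_matD[OF A_carrier]
  define P where "P = basis_mat (d+1) v"
  have Pc: "P \<in> carrier_mat (d+1) (d+1)" unfolding P_def by simp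
  have vc: "\<And>s. s < d+1 \<Longrightarrow> v s \<in> carrier_vec (d+1)" using v_carrier by simp
  have Estv: "Est i *\<^sub>v v s = (if s = i then v s else 0\<^sub>v (d+1))" if i: "i < d+1" and s: "s < d+1" for i s
  proof (cases "s = i")
    case True thus ?thesis using v_in[of s] s by simp
  next
    case False
    have "Est i *\<^sub>v v s = Est i *\<^sub>v (Est s *\<^sub>v v s)" using v_in[of s] s by simp
    also have "\<dots> = (Est i * Est s) *\<^sub>v v s"
      using assoc_mult_mat_vec[OF Est_carrier Est_carrier vc[OF s], of i s] i s by simp
    also have "\<dots> = 0\<^sub>v (d+1)" using Est_orth[of i s] False i s zero_mat_vec[OF vc[OF s]] by simp
    finally show ?thesis using False by simp
  qed
  have Pdet: "det P \<noteq> 0" unfolding P_def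
    by (rule indep[of "d+1" v Est], use vc v_nz Est_carrier Estv in auto)
  obtain GP where GP: "GP \<in> carrier_mat (d+1) (d+1)" "GP * P = 1\<^sub>m (d+1)" "P * GP = 1\<^sub>m (d+1)"
    using inv_ex[OF Pc Pdet] by blast
  have Yc: "Y \<in> carrier_mat (d+1) (d+1)" and AP: "A * P = P * Y"
    using Y_rep unfolding represents_def P_def by auto
  have EstP: "Est i * P = P * ei (d+1) i i" if "i < d+1" for i unfolding P_def
    by (rule proj_basis, use that Est_carrier vc Estv in auto)
  have Yz: "(Est i * A * Est j = 0\<^sub>m (d+1) (d+1)) = (Y $$ (i,j) = 0)" if "i \<le> d" "j \<le> d" for i j
    by (rule coeff_zero[OF Pc GP(1) GP(2) GP(3) Ac Yc AP], use that Est_carrier EstP in auto)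
  have Ydiag: "Y $$ (i,i) = 0" if "i \<le> d" for i
    using coeff_trace[OF Pc GP(1) GP(2) GP(3) Ac Yc AP, of "Est i" i] that Est_carrier[of i] EstP[of i] bipartite[of i]
    by simp
  have band: "Y $$ (j,i) = 0" if "i \<le> d" "j \<le> d" "j + 1 \<noteq> i" "j \<noteq> i + 1" for i j
  proof (cases "j = i")
    case True thus ?thesis using Ydiag that by simp
  next
    case False
    hence "j + 1 < i \<or> i + 1 < j" using that by auto
    thus ?thesis using A_tri0[of j i] Yz[of j i] that by auto
  qed
  have bnz: "Y $$ (i, i+1) \<noteq> 0" if "i < d" for i
    using A_tri1[of i "i+1"] Yz[of i "i+1"] that by auto
  have cnz: "Y $$ (i, i-1) \<noteq> 0" if "1 \<le> i" "i \<le> d" for i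
    using A_tri1[of i "i-1"] Yz[of i "i-1"] that by auto
  have "\<forall>l. \<exists>x. l \<le> d \<longrightarrow> eigenvector A x (\<theta> l)" using theta_eig unfolding eigenvalue_def by blast
  from choice[OF this] obtain e where e: "\<And>l. l \<le> d \<Longrightarrow> eigenvector A (e l) (\<theta> l)" by blast
  have ec: "e l \<in> carrier_vec (d+1)" and enz: "e l \<noteq> 0\<^sub>v (d+1)" and Ae: "A *\<^sub>v e l = \<theta> l \<cdot>\<^sub>v e l"
    if "l \<le> d" for l using e[OF that] unfolding eigenvector_def by auto
  have Ee: "E i *\<^sub>v e s = (if s = i then e s else 0\<^sub>v (d+1))" if "i < d+1" "s < d+1" for i s
    using E_on[of i "e s"] E_off[of i s "e s"] ec[of s] Ae[of s] that by auto
  define R where "R = basis_mat (d+1) e"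
  have Rc: "R \<in> carrier_mat (d+1) (d+1)" unfolding R_def by simp
  have Rdet: "det R \<noteq> 0" unfolding R_def
    by (rule indep[of "d+1" e E], use ec enz E_carrier Ee in auto)
  obtain GR where GR: "GR \<in> carrier_mat (d+1) (d+1)" "GR * R = 1\<^sub>m (d+1)" "R * GR = 1\<^sub>m (d+1)"
    using inv_ex[OF Rc Rdet] by blast
  have AR: "A * R = R * dg (d+1) \<theta>" unfolding R_def
    by (rule eig_basis, use Ac ec Ae in auto)
  have ER: "E i * R = R * ei (d+1) i i" if "i < d+1" for i unfolding R_def
    by (rule proj_basis, use that E_carrier ec Ee in auto)
  have weig: "A *\<^sub>v w i = \<theta> i \<cdot>\<^sub>v w i" if i: "i \<le> d" for i
  proof -
    define c where "c = GR *\<^sub>v w i"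
    have cc: "c \<in> carrier_vec (d+1)" unfolding c_def using GR(1) w_carrier[OF i] by simp
    have wR: "w i = R *\<^sub>v c"
      unfolding c_def using assoc_mult_mat_vec[OF Rc GR(1) w_carrier[OF i]] GR(3) w_carrier[OF i] by simp
    have RE: "R * ei (d+1) i i \<in> carrier_mat (d+1) (d+1)" using Rc by simp
    have w2: "w i = (R * ei (d+1) i i) *\<^sub>v c"
    proof -
      have "w i = E i *\<^sub>v w i" using w_in[OF i] by simp
      also have "\<dots> = E i *\<^sub>v (R *\<^sub>v c)" using wR by simp
      also have "\<dots> = (E i * R) *\<^sub>v c" using assoc_mult_mat_vec[OF E_carrier[OF i] Rc cc] by simp
      also have "\<dots> = (R * ei (d+1) i i) *\<^sub>v c" using ER[of i] i by simp
      finally show ?thesis .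
    qed
    have "A * (R * ei (d+1) i i) = \<theta> i \<cdot>\<^sub>m (R * ei (d+1) i i)"
    proof -
      have "A * (R * ei (d+1) i i) = (A * R) * ei (d+1) i i" using assoc_mult_mat[OF Ac Rc ei_carrier] by simp
      also have "\<dots> = R * (dg (d+1) \<theta> * ei (d+1) i i)" using AR assoc_mult_mat[OF Rc dg_carrier ei_carrier] by simp
      also have "\<dots> = R * (\<theta> i \<cdot>\<^sub>m ei (d+1) i i)" using dg_ei[of i "d+1" \<theta>] i by simp
      also have "\<dots> = \<theta> i \<cdot>\<^sub>m (R * ei (d+1) i i)" by (rule mult_smult_distrib[OF Rc ei_carrier])
      finally show ?thesis .
    qed
    hence "A *\<^sub>v w i = (\<theta> i \<cdot>\<^sub>m (R * ei (d+1) i i)) *\<^sub>v c"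
      using w2 assoc_mult_mat_vec[OF Ac RE cc] by simp
    also have "\<dots> = \<theta> i \<cdot>\<^sub>v w i" using smult_mat_vec[OF RE cc] w2 by simp
    finally show ?thesis .
  qed
  have Ew: "E i *\<^sub>v w s = (if s = i then w s else 0\<^sub>v (d+1))" if "i < d+1" "s < d+1" for i s
    using E_on[of i "w s"] E_off[of i s "w s"] w_carrier[of s] weig[of s] that by auto
  define Q where "Q = basis_mat (d+1) w"
  have Qc: "Q \<in> carrier_mat (d+1) (d+1)" unfolding Q_def by simp
  have Qdet: "det Q \<noteq> 0" unfolding Q_def
    by (rule indep[of "d+1" w E], use w_carrier w_nz E_carrier Ew in auto)
  obtain GQ where GQ: "GQ \<in> carrier_mat (d+1) (d+1)" "GQ * Q = 1\<^sub>m (d+1)" "Q * GQ = 1\<^sub>m (d+1)"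
    using inv_ex[OF Qc Qdet] by blast
  have AQ: "A * Q = Q * dg (d+1) \<theta>" unfolding Q_def
    by (rule eig_basis, use Ac w_carrier weig in auto)
  have EQ: "E i * Q = Q * ei (d+1) i i" if "i < d+1" for i unfolding Q_def
    by (rule proj_basis, use that E_carrier w_carrier Ew in auto)
  have Zc: "Z \<in> carrier_mat (d+1) (d+1)" and AsQ: "As * Q = Q * Z"
    using Z_rep unfolding represents_def Q_def by auto
  have Asc: "As \<in> carrier_mat (d+1) (d+1)" unfolding As_def lin_comb_mat_def by simp
  have Asv: "As *\<^sub>v v j = \<theta>s j \<cdot>\<^sub>v v j" if j: "j < d+1" for j
  proof (rule eq_vecI)
    fix r assume "r < dim_vec (\<theta>s j \<cdot>\<^sub>v v j)"
    hence r: "r < d+1" using vc[OF j] by simp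
    have "(As *\<^sub>v v j) $ r = (\<Sum>s<d+1. (\<Sum>k\<in>{0..d}. \<theta>s k * Est k $$ (r,s)) * v j $ s)"
      using r vc[OF j] unfolding As_def lin_comb_mat_def by (simp add: scalar_prod_def atLeast0LessThan)
    also have "\<dots> = (\<Sum>k\<in>{0..d}. \<theta>s k * (\<Sum>s<d+1. Est k $$ (r,s) * v j $ s))"
      by (simp only: sum_distrib_right sum_distrib_left mult.assoc) (rule sum.swap)
    also have "\<dots> = (\<Sum>k\<in>{0..d}. \<theta>s k * (Est k *\<^sub>v v j) $ r)"
    proof (rule sum.cong)
      fix k assume "k \<in> {0..d}"
      hence k: "k \<le> d" by auto
      show "\<theta>s k * (\<Sum>s<d+1. Est k $$ (r,s) * v j $ s) = \<theta>s k * (Est k *\<^sub>v v j) $ r"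
        using r k Est_carrier[OF k] vc[OF j] by (simp add: scalar_prod_def atLeast0LessThan)
    qed simp
    also have "\<dots> = (\<Sum>k\<in>{0..d}. if k = j then \<theta>s j * v j $ r else 0)"
    proof (rule sum.cong)
      fix k assume "k \<in> {0..d}"
      hence k: "k < d+1" by auto
      show "\<theta>s k * (Est k *\<^sub>v v j) $ r = (if k = j then \<theta>s j * v j $ r else 0)"
        using Estv[OF k j] r by auto
    qed simp
    also have "\<dots> = \<theta>s j * v j $ r" using j by simp
    finally show "(As *\<^sub>v v j) $ r = (\<theta>s j \<cdot>\<^sub>v v j) $ r" using r vc[OF j] by simp
  qed (use Asc vc[OF j] in simp)
  have AsP: "As * P = P * dg (d+1) \<theta>s" unfolding P_def
    by (rule eig_basis, use Asc vc Asv in auto)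
  have Zz: "(E i * As * E j = 0\<^sub>m (d+1) (d+1)) = (Z $$ (i,j) = 0)" if "i \<le> d" "j \<le> d" for i j
    by (rule coeff_zero[OF Qc GQ(1) GQ(2) GQ(3) Asc Zc AsQ], use that E_carrier EQ in auto)
  have Zt: "mat_trace (E i * As) = Z $$ (i,i)" if "i \<le> d" for i
    using coeff_trace[OF Qc GQ(1) GQ(2) GQ(3) Asc Zc AsQ, of "E i" i] that E_carrier[of i] EQ[of i] by simp
  have Z0: "Z $$ (0,j) = 0" if "2 \<le> j" "j \<le> d" for j
    using tail0[of j] Zz[of 0 j] that by auto
  have Z1: "Z $$ (1,j) = 0" if "3 \<le> j" "j \<le> d" for j
  proof (rule ccontr)
    assume "Z $$ (1,j) \<noteq> 0"
    hence "E 1 * As * E j \<noteq> 0\<^sub>m (d+1) (d+1)" using Zz[of 1 j] that by auto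
    hence "j = 2" using tail1[of j 2] adj12 that d3 by auto
    thus False using that by simp
  qed
  define N where "N = GQ * P"
  have Nc: "N \<in> carrier_mat (d+1) (d+1)" unfolding N_def using GQ(1) Pc by simp
  note [simp] = carrier_matD[OF Pc] carrier_matD[OF Qc] carrier_matD[OF GQ(1)] carrier_matD[OF GP(1)]
    carrier_matD[OF Yc] carrier_matD[OF Zc] carrier_matD[OF Asc] carrier_matD[OF Nc]
  have GQA: "GQ * A = dg (d+1) \<theta> * GQ"
  proof -
    have "GQ * A = GQ * (A * (Q * GQ))" using GQ(3) by simp
    also have "\<dots> = GQ * (Q * (dg (d+1) \<theta> * GQ))"
      using assoc_eq[OF Ac Qc Qc dg_carrier AQ GQ(1)] by simp
    also have "\<dots> = (GQ * Q) * (dg (d+1) \<theta> * GQ)" by (simp add: assoc_dims)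
    also have "\<dots> = dg (d+1) \<theta> * GQ" unfolding GQ(2) by simp
    finally show ?thesis .
  qed
  have NY: "N * Y = dg (d+1) \<theta> * N"
  proof -
    have "N * Y = GQ * (P * Y)" unfolding N_def by (simp add: assoc_dims)
    also have "\<dots> = GQ * (A * P)" using AP by simp
    also have "\<dots> = (GQ * A) * P" by (simp add: assoc_dims)
    also have "\<dots> = dg (d+1) \<theta> * N" unfolding GQA N_def by (simp add: assoc_dims)
    finally show ?thesis .
  qed
  have ZN: "Z * N = N * dg (d+1) \<theta>s"
  proof -
    have Z: "Z = GQ * (As * Q)"
    proof -
      have "GQ * (As * Q) = GQ * (Q * Z)" using AsQ by simp
      also have "\<dots> = (GQ * Q) * Z" by (simp add: assoc_dims)
      also have "\<dots> = Z" unfolding GQ(2) by simp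
      finally show ?thesis by simp
    qed
    have "Z * N = GQ * (As * (Q * (GQ * P)))" unfolding N_def Z by (simp add: assoc_dims)
    also have "\<dots> = GQ * (As * ((Q * GQ) * P))" by (simp add: assoc_dims)
    also have "\<dots> = GQ * (As * P)" unfolding GQ(3) by simp
    also have "\<dots> = GQ * (P * dg (d+1) \<theta>s)" using AsP by simp
    also have "\<dots> = N * dg (d+1) \<theta>s" unfolding N_def by (simp add: assoc_dims)
    finally show ?thesis .
  qed
  have Ninv: "N * (GP * Q) = 1\<^sub>m (d+1)"
  proof -
    have "N * (GP * Q) = GQ * ((P * GP) * Q)" unfolding N_def by (simp add: assoc_dims)
    also have "\<dots> = 1\<^sub>m (d+1)" unfolding GP(3) using GQ(2) by simp
    finally show ?thesis .
  qed
  have L: "(\<Sum>j<d+1. N $$ (l,j) * Y $$ (j,i)) = \<theta> l * N $$ (l,i)" if "l \<le> d" "i \<le> d" for l i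
  proof -
    have "(N * Y) $$ (l,i) = (dg (d+1) \<theta> * N) $$ (l,i)" using NY by simp
    thus ?thesis using mult_entry[OF Nc Yc, of l i] dg_left[OF Nc, of l i \<theta>] that by simp
  qed
  have RZ: "(\<Sum>k<d+1. Z $$ (l,k) * N $$ (k,j)) = N $$ (l,j) * \<theta>s j" if "l \<le> d" "j \<le> d" for l j
  proof -
    have "(Z * N) $$ (l,j) = (N * dg (d+1) \<theta>s) $$ (l,j)" using ZN by simp
    thus ?thesis using mult_entry[OF Zc Nc, of l j] dg_right[OF Nc, of l j \<theta>s] that by simp
  qed
  have R0: "Z $$ (0,0) * N $$ (0,j) + Z $$ (0,1) * N $$ (1,j) = N $$ (0,j) * \<theta>s j" if "j \<le> d" for j
  proof -
    have "(\<Sum>k<d+1. Z $$ (0,k) * N $$ (k,j)) = Z $$ (0,0) * N $$ (0,j) + Z $$ (0,1) * N $$ (1,j)"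
      by (rule sum_two, use d3 Z0 in auto)
    thus ?thesis using RZ[of 0 j] that by simp
  qed
  have R1: "Z $$ (1,0) * N $$ (0,j) + Z $$ (1,1) * N $$ (1,j) + Z $$ (1,2) * N $$ (2,j) = N $$ (1,j) * \<theta>s j"
    if "j \<le> d" for j
  proof -
    have "(\<Sum>k<d+1. Z $$ (1,k) * N $$ (k,j)) = Z $$ (1,0) * N $$ (0,j) + Z $$ (1,1) * N $$ (1,j) + Z $$ (1,2) * N $$ (2,j)"
      by (rule sum_three, use d3 Z1 in auto)
    thus ?thesis using RZ[of 1 j] that d3 by simp
  qed
  have bnz0: "\<exists>j\<le>d. N $$ (0,j) \<noteq> 0"
  proof (rule ccontr)
    assume "\<not> ?thesis"
    hence z: "\<And>j. j < d+1 \<Longrightarrow> N $$ (0,j) = 0" by auto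
    have "(N * (GP * Q)) $$ (0,0) = (\<Sum>j<d+1. N $$ (0,j) * (GP * Q) $$ (j,0))"
      by (rule mult_entry[OF Nc], use GP(1) Qc in auto)
    also have "\<dots> = 0" using z by simp
    finally show False using Ninv by simp
  qed
  show ?thesis
  proof (intro allI impI)
    fix i assume i: "i \<le> d"
    have L0: "\<And>i. i \<le> d \<Longrightarrow> (\<Sum>j<d+1. N $$ (0,j) * Y $$ (j,i)) = \<theta> 0 * N $$ (0,i)"
      using L d3 by auto
    have L1: "\<And>i. i \<le> d \<Longrightarrow> (\<Sum>j<d+1. N $$ (1,j) * Y $$ (j,i)) = \<theta> 1 * N $$ (1,i)"
      using L d3 by auto
    have L2: "\<And>i. i \<le> d \<Longrightarrow> (\<Sum>j<d+1. N $$ (2,j) * Y $$ (j,i)) = \<theta> 2 * N $$ (2,i)"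
      using L d3 by auto
    note X = scalar_core[where ?\<beta> = "\<lambda>j. N $$ (0,j)" and ?\<gamma> = "\<lambda>j. N $$ (1,j)"
      and ?\<delta> = "\<lambda>j. N $$ (2,j)" and ?Y = "\<lambda>j i. Y $$ (j,i)" and ?Z00.0 = "Z $$ (0,0)"
      and ?Z01.0 = "Z $$ (0,1)" and ?Z10.0 = "Z $$ (1,0)" and ?Z11.0 = "Z $$ (1,1)" and ?Z12.0 = "Z $$ (1,2)"
      and ?\<theta> = \<theta> and ?\<theta>s = \<theta>s and ?\<alpha> = \<alpha>,
      OF d3 R0 R1 L0 L1 L2 band bnz cnz alpha0 alpha_rec bnz0 i]
    have t0: "mat_trace (E 0 * As) = Z $$ (0,0)" using Zt[of 0] by simp
    have t1: "mat_trace (E 1 * As) = Z $$ (1,1)" using Zt[of 1] d3 by simp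
    show "let as = (\<lambda>j. mat_trace (E j * As));
         b = (\<lambda>j. Y $$ (j, j + 1));
         c = (\<lambda>j. Y $$ (j, j - 1));
         bc = Z $$ (0, 1) * Z $$ (1, 0);
         \<psi> = \<theta>s 1 + \<theta>s 0 - as 1 - as 0;
         \<zeta> = as 0 * as 1 - bc - \<theta>s 0 * \<theta>s 1
     in (if i = 0 then 0
         else c i * (\<theta>s (i - 1) - \<theta>s 0) * (\<theta>s (i - 1) - \<theta>s 1) * \<alpha> (i - 1))
      + (if i = d then 0
         else b i * (\<theta>s (i + 1) - \<theta>s 0) * (\<theta>s (i + 1) - \<theta>s 1) * \<alpha> (i + 1))
      = \<theta> 2 * (\<theta>s i - \<theta>s 0) * (\<theta>s i - \<theta>s 1) * \<alpha> i
        + (\<theta> 2 - \<theta> 1) * \<psi> * \<theta>s i * \<alpha> i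
        + (\<theta> 1 - \<theta> 0) * \<psi> * as 0 * \<alpha> i
        + (\<theta> 2 - \<theta> 0) * \<zeta> * \<alpha> i"
      using X unfolding Let_def t0 t1 .
  qed
qed

end
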